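(* Let $\Sigma \rightarrow G$ be a twist, where $G$ is a locally compact Hausdorff étale groupoid, and let $L \colon G \rightarrow [0,\infty)$ be a continuous length function on $G$. Let $p\in\mathbb{Z}_+$. If $f \in H^{2,L,p}(\Sigma; G)$ has open support $U \subseteq G$, then $f$ lies in the closure of $C_c(\Sigma|_U;U)$ with respect to $\|\cdot\|_{2,p,L}$. In particular, if $f \in H^{2,L}(\Sigma; G)$ has open support $U \subseteq G$, then $f \in H^{2,L}(\Sigma|_U;U)$.
   Context: A twist $\Sigma\rightarrow G$ is a locally trivial central extension $\mathbb{T}\times G^{(0)}\to\Sigma\to G$; it determines a line bundle over $G$ whose fibres carry an absolute value. $C_c(\Sigma;G)$ is the space of continuous compactly supported sections of this bundle, $C_0(\Sigma;G)$ the continuous sections vanishing at infinity, and for $U\subseteq G$, $C_c(\Sigma|_U;U)$ (resp. $C_0(\Sigma|_U;U)$) the sections supported in $U$. The support of a section $f$ is $\operatorname{supp}(f)=\{\gamma: f(\gamma)\ne0\}$. A length function is $L\colon G\to[0,\infty)$ with $L|_{G^{(0)}}=0$, $L(\gamma)=L(\gamma^{-1})$, and $L(\gamma_1\gamma_2)\le L(\gamma_1)+L(\gamma_2)$ for composable pairs. For $p\in\mathbb{Z}_+$ and $f\in C_c(\Sigma;G)$ set $\|f\|_{2,p,L}=\max\{\sup_{x}(\sum_{\gamma\in G_x}|f(\gamma)|^2(1+L(\gamma))^{2p})^{1/2},\ \sup_x(\sum_{\gamma\in G^x}|f(\gamma)|^2(1+L(\gamma))^{2p})^{1/2}\}$,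 where $G_x=s^{-1}(x)$, $G^x=r^{-1}(x)$. $H^{2,L,p}(\Sigma;G)$ is the completion of $C_c(\Sigma;G)$ in $\|\cdot\|_{2,p,L}$ (viewed as sections), and the Schwartz space is $H^{2,L}(\Sigma;G)=\bigcap_{p\in\mathbb{Z}_+}H^{2,L,p}(\Sigma;G)\cap C_0(\Sigma;G)$. For $U\subseteq G$, $H^{2,L}(\Sigma|_U;U)=\bigcap_{p\ge1}\overline{C_c(\Sigma|_U;U)}^{\|\cdot\|_{2,p,L}}\cap C_0(\Sigma|_U;U)$. *)

theory Defs
  imports "HOL-Analysis.Analysis"
begin

section \<open>Groupoids (the whole type is the arrow space)\<close>

text \<open>r = range map, s = source map, m = multiplication (defined on composable
pairs, i.e. s a = r b), i = inversion. The unit space is range r.\<close>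

definition groupoid :: "('g \<Rightarrow> 'g) \<Rightarrow> ('g \<Rightarrow> 'g) \<Rightarrow> ('g \<Rightarrow> 'g \<Rightarrow> 'g) \<Rightarrow> ('g \<Rightarrow> 'g) \<Rightarrow> bool" where
  "groupoid r s m i \<longleftrightarrow>
     (\<forall>a. r (r a) = r a \<and> s (r a) = r a \<and> r (s a) = s a \<and> s (s a) = s a) \<and>
     (\<forall>a b. s a = r b \<longrightarrow> r (m a b) = r a \<and> s (m a b) = s b) \<and>
     (\<forall>a b c. s a = r b \<and> s b = r c \<longrightarrow> m (m a b) c = m a (m b c)) \<and>
     (\<forall>a. m (r a) a = a \<and> m a (s a) = a) \<and>
     (\<forall>a. s (i a) = r a \<and> r (i a) = s a \<and> m a (i a) = r a \<and> m (i a) a = s a)"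

definition topological_groupoid ::
  "('g::topological_space \<Rightarrow> 'g) \<Rightarrow> ('g \<Rightarrow> 'g) \<Rightarrow> ('g \<Rightarrow> 'g \<Rightarrow> 'g) \<Rightarrow> ('g \<Rightarrow> 'g) \<Rightarrow> bool" where
  "topological_groupoid r s m i \<longleftrightarrow>
     groupoid r s m i \<and> continuous_on UNIV r \<and> continuous_on UNIV s \<and>
     continuous_on UNIV i \<and> continuous_on {(a, b). s a = r b} (\<lambda>(a, b). m a b)"

definition lch_etale_groupoid ::
  "('g::t2_space \<Rightarrow> 'g) \<Rightarrow> ('g \<Rightarrow> 'g) \<Rightarrow> ('g \<Rightarrow> 'g \<Rightarrow> 'g) \<Rightarrow> ('g \<Rightarrow> 'g) \<Rightarrow> bool" where
  "lch_etale_groupoid r s m i \<longleftrightarrow>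
     topological_groupoid r s m i \<and>
     locally_compact_space (euclidean :: 'g topology) \<and>
     (\<forall>\<gamma>. \<exists>V. open V \<and> \<gamma> \<in> V \<and> open (s ` V) \<and> (\<exists>g. homeomorphism V (s ` V) s g))"

abbreviation circle :: "complex set" where "circle \<equiv> sphere 0 1"

text \<open>A twist T x G0 \<rightarrow> Sigma \<rightarrow> G: Sigma is a topological groupoid (rS,sS,mS,iS)
on the type 's, \<pi> : Sigma \<rightarrow> G is a continuous surjective groupoid homomorphism
which is a bijection on unit spaces, \<iota> : T x G0 \<rightarrow> Sigma (written curried as
\<iota> z x) is a homeomorphism onto \<pi>^{-1}(G0), a homomorphism of the group bundle
T x G0, whose image is central, and the extension is locally trivial.\<close>

definition twist ::
  "('g::t2_space \<Rightarrow> 'g) \<Rightarrow> ('g \<Rightarrow> 'g) \<Rightarrow> ('g \<Rightarrow> 'g \<Rightarrow> 'g) \<Rightarrow> ('g \<Rightarrow> 'g) \<Rightarrow>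
   ('s::topological_space \<Rightarrow> 's) \<Rightarrow> ('s \<Rightarrow> 's) \<Rightarrow> ('s \<Rightarrow> 's \<Rightarrow> 's) \<Rightarrow> ('s \<Rightarrow> 's) \<Rightarrow>
   ('s \<Rightarrow> 'g) \<Rightarrow> (complex \<Rightarrow> 'g \<Rightarrow> 's) \<Rightarrow> bool" where
  "twist r s m i rS sS mS iS \<pi> \<iota> \<longleftrightarrow>
     topological_groupoid rS sS mS iS \<and>
     \<comment> \<open>\<pi> continuous surjective groupoid homomorphism\<close>
     continuous_on UNIV \<pi> \<and> surj \<pi> \<and>
     (\<forall>a. \<pi> (rS a) = r (\<pi> a) \<and> \<pi> (sS a) = s (\<pi> a)) \<and>
     (\<forall>a b. sS a = rS b \<longrightarrow> \<pi> (mS a b) = m (\<pi> a) (\<pi> b)) \<and>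
     \<comment> \<open>\<pi> identifies the unit spaces\<close>
     inj_on \<pi> (range rS) \<and>
     \<comment> \<open>\<iota> is a groupoid homomorphism from T x G0 into Sigma over G0\<close>
     (\<forall>z\<in>circle. \<forall>x\<in>range r. \<pi> (\<iota> z x) = x \<and> rS (\<iota> z x) = sS (\<iota> z x)) \<and>
     (\<forall>x\<in>range r. \<iota> 1 x \<in> range rS) \<and>
     (\<forall>z\<in>circle. \<forall>w\<in>circle. \<forall>x\<in>range r. \<iota> (z * w) x = mS (\<iota> z x) (\<iota> w x)) \<and>
     \<comment> \<open>\<iota> is a homeomorphism of T x G0 onto \<pi>^{-1}(G0) (injective + exactness)\<close>
     (\<exists>g. homeomorphism (circle \<times> range r) (\<pi> -` range r) (\<lambda>(z, x). \<iota> z x) g) \<and>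
     \<comment> \<open>centrality\<close>
     (\<forall>z\<in>circle. \<forall>\<sigma>. mS (\<iota> z (r (\<pi> \<sigma>))) \<sigma> = mS \<sigma> (\<iota> z (s (\<pi> \<sigma>)))) \<and>
     \<comment> \<open>local triviality\<close>
     (\<forall>\<gamma>. \<exists>V c. open V \<and> \<gamma> \<in> V \<and> continuous_on V c \<and> (\<forall>\<delta>\<in>V. \<pi> (c \<delta>) = \<delta>) \<and>
        (\<exists>g. homeomorphism (circle \<times> V) (\<pi> -` V) (\<lambda>(z, \<delta>). mS (\<iota> z (r \<delta>)) (c \<delta>)) g))"

definition tact :: "('g \<Rightarrow> 'g) \<Rightarrow> ('s \<Rightarrow> 's \<Rightarrow> 's) \<Rightarrow> ('s \<Rightarrow> 'g) \<Rightarrow> (complex \<Rightarrow> 'g \<Rightarrow> 's)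
   \<Rightarrow> complex \<Rightarrow> 's \<Rightarrow> 's" where
  "tact r mS \<pi> \<iota> z \<sigma> = mS (\<iota> z (r (\<pi> \<sigma>))) \<sigma>"

text \<open>A section of the line bundle of the twist is a function f on Sigma with
f(z\<cdot>\<sigma>) = z f(\<sigma>) for z in T.\<close>

definition is_section where
  "is_section r mS \<pi> \<iota> (f :: 's \<Rightarrow> complex) \<longleftrightarrow>
     (\<forall>z\<in>circle. \<forall>\<sigma>. f (tact r mS \<pi> \<iota> z \<sigma>) = z * f \<sigma>)"

definition sec_supp :: "('s \<Rightarrow> 'g) \<Rightarrow> ('s \<Rightarrow> complex) \<Rightarrow> 'g set" where
  "sec_supp \<pi> f = \<pi> ` {\<sigma>. f \<sigma> \<noteq> 0}"

text \<open>The absolute value |f(\<gamma>)|, well defined for sections.\<close>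

definition sec_abs :: "('s \<Rightarrow> 'g) \<Rightarrow> ('s \<Rightarrow> complex) \<Rightarrow> 'g \<Rightarrow> real" where
  "sec_abs \<pi> f \<gamma> = norm (f (SOME \<sigma>. \<pi> \<sigma> = \<gamma>))"

text \<open>C_c(Sigma|_U;U): continuous compactly supported sections supported in U
(U = UNIV gives C_c(Sigma;G)).\<close>

definition Cc_sec where
  "Cc_sec r mS \<pi> \<iota> U =
     {f. is_section r mS \<pi> \<iota> f \<and> continuous_on UNIV f \<and>
         compact (closure (sec_supp \<pi> f)) \<and> sec_supp \<pi> f \<subseteq> U}"

definition C0_sec where
  "C0_sec r mS \<pi> \<iota> U =
     {f. is_section r mS \<pi> \<iota> f \<and> continuous_on UNIV f \<and>
         (\<forall>\<epsilon>>0. compact (\<pi> ` {\<sigma>. \<epsilon> \<le> norm (f \<sigma>)})) \<and> sec_supp \<pi> f \<subseteq> U}"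

definition length_function :: "('g \<Rightarrow> 'g) \<Rightarrow> ('g \<Rightarrow> 'g) \<Rightarrow> ('g \<Rightarrow> 'g \<Rightarrow> 'g) \<Rightarrow> ('g \<Rightarrow> 'g)
   \<Rightarrow> ('g \<Rightarrow> real) \<Rightarrow> bool" where
  "length_function r s m i L \<longleftrightarrow>
     (\<forall>\<gamma>. L \<gamma> \<ge> 0) \<and> (\<forall>x\<in>range r. L x = 0) \<and> (\<forall>\<gamma>. L (i \<gamma>) = L \<gamma>) \<and>
     (\<forall>a b. s a = r b \<longrightarrow> L (m a b) \<le> L a + L b)"

text \<open>The square of the norm \<parallel>f\<parallel>_{2,p,L}, valued in [0,\<infinity>] so that it makes
sense for arbitrary sections.\<close>

definition norm2pL_sq :: "('g \<Rightarrow> 'g) \<Rightarrow> ('g \<Rightarrow> 'g) \<Rightarrow> ('s \<Rightarrow> 'g) \<Rightarrow> ('g \<Rightarrow> real) \<Rightarrow> nat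
   \<Rightarrow> ('s \<Rightarrow> complex) \<Rightarrow> ennreal" where
  "norm2pL_sq r s \<pi> L p f =
     max (SUP x\<in>range r. \<Sum>\<^sub>\<infinity>\<gamma>\<in>{\<gamma>. s \<gamma> = x}.
            ennreal ((sec_abs \<pi> f \<gamma>)\<^sup>2 * (1 + L \<gamma>) ^ (2 * p)))
         (SUP x\<in>range r. \<Sum>\<^sub>\<infinity>\<gamma>\<in>{\<gamma>. r \<gamma> = x}.
            ennreal ((sec_abs \<pi> f \<gamma>)\<^sup>2 * (1 + L \<gamma>) ^ (2 * p)))"

text \<open>Closure of a set A of sections with respect to \<parallel>.\<parallel>_{2,p,L}, realised
inside the space of all sections (this is the completion viewed as sections).\<close>

definition sec_closure where
  "sec_closure r s mS \<pi> \<iota> L p A =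
     {f. is_section r mS \<pi> \<iota> f \<and>
         (\<exists>F. (\<forall>n. F n \<in> A) \<and>
              (\<lambda>n. norm2pL_sq r s \<pi> L p (\<lambda>\<sigma>. F n \<sigma> - f \<sigma>)) \<longlonglongrightarrow> 0)}"

definition H2Lp where
  "H2Lp r s mS \<pi> \<iota> L p = sec_closure r s mS \<pi> \<iota> L p (Cc_sec r mS \<pi> \<iota> UNIV)"

text \<open>Schwartz space H^{2,L}(Sigma|_U;U); U = UNIV gives H^{2,L}(Sigma;G).
p ranges over nat (the p = 0 term is implied by p = 1 anyway).\<close>

definition H2L where
  "H2L r s mS \<pi> \<iota> L U =
     (\<Inter>p. sec_closure r s mS \<pi> \<iota> L p (Cc_sec r mS \<pi> \<iota> U)) \<inter> C0_sec r mS \<pi> \<iota> U"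

end

theory Submission
  imports Defs
begin


lemma ens: "(f::_\<Rightarrow>ennreal) summable_on A" by (simp add: nonneg_summable_on_complete)

lemma groupoid_ii:
  assumes "groupoid r s m i" shows "i (i a) = a"
proof -
  note G = assms[unfolded groupoid_def]
  let ?b = "i a" let ?c = "i (i a)"
  have sc: "s ?c = s a" using G by metis
  have "?c = m ?c (s ?c)" using G by metis
  also have "\<dots> = m ?c (m ?b a)" using G sc by metis
  also have "\<dots> = m (m ?c ?b) a"
  proof -
    have "s ?c = r ?b" "s ?b = r a" using G by metis+
    then show ?thesis using G by metis
  qed
  also have "m ?c ?b = r a" using G by metis
  also have "m (r a) a = a" using G by metis
  finally show ?thesis .
qed

lemma twist_fiber:
  assumes T: "twist r s m i rS sS mS iS \<pi> \<iota>" and G: "groupoid r s m i"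
    and eq: "\<pi> \<sigma>' = \<pi> \<sigma>"
  shows "\<exists>w\<in>circle. \<sigma>' = tact r mS \<pi> \<iota> w \<sigma>"
proof -
  have GS: "groupoid rS sS mS iS" using T unfolding twist_def topological_groupoid_def by blast
  note GG = G[unfolded groupoid_def]
  note GSS = GS[unfolded groupoid_def]
  note TT = T[unfolded twist_def]
  have injU: "inj_on \<pi> (range rS)" using TT by blast
  have piS: "\<And>a. \<pi> (sS a) = s (\<pi> a)" and piR: "\<And>a. \<pi> (rS a) = r (\<pi> a)" using TT by blast+
  have piM: "\<And>a b. sS a = rS b \<Longrightarrow> \<pi> (mS a b) = m (\<pi> a) (\<pi> b)" using TT by blast
  have units: "\<And>a b. \<pi> (sS a) = \<pi> (rS b) \<Longrightarrow> sS a = rS b"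
  proof -
    fix a b assume h: "\<pi> (sS a) = \<pi> (rS b)"
    have "sS a \<in> range rS" using GSS by (metis rangeI)
    moreover have "rS b \<in> range rS" by simp
    ultimately show "sS a = rS b" using injU h by (meson inj_onD)
  qed
  have unitsS: "\<And>a b. \<pi> (sS a) = \<pi> (sS b) \<Longrightarrow> sS a = sS b"
    using units GSS by metis
  have iota: "\<And>z x. z \<in> circle \<Longrightarrow> x \<in> range r \<Longrightarrow> \<pi> (\<iota> z x) = x \<and> rS (\<iota> z x) = sS (\<iota> z x)"
    using TT by blast
  have iotaM: "\<And>z w x. z \<in> circle \<Longrightarrow> w \<in> circle \<Longrightarrow> x \<in> range r \<Longrightarrow> \<iota> (z * w) x = mS (\<iota> z x) (\<iota> w x)"
    using TT by blast
  obtain V c g where V: "open V" "\<pi> \<sigma> \<in> V" "\<forall>\<delta>\<in>V. \<pi> (c \<delta>) = \<delta>"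
    and H: "homeomorphism (circle \<times> V) (\<pi> -` V) (\<lambda>(z, \<delta>). mS (\<iota> z (r \<delta>)) (c \<delta>)) g"
    using TT by meson
  have img: "(\<lambda>(z, \<delta>). mS (\<iota> z (r \<delta>)) (c \<delta>)) ` (circle \<times> V) = \<pi> -` V"
    using H unfolding homeomorphism_def by blast
  have comp: "\<And>z \<delta>. z \<in> circle \<Longrightarrow> \<delta> \<in> V \<Longrightarrow> sS (\<iota> z (r \<delta>)) = rS (c \<delta>)"
  proof -
    fix z \<delta> assume z: "z \<in> circle" and d: "\<delta> \<in> V"
    have "\<pi> (sS (\<iota> z (r \<delta>))) = s (r \<delta>)" using piS iota[OF z] by (metis rangeI)
    also have "\<dots> = r \<delta>" using GG by metis
    also have "\<dots> = \<pi> (rS (c \<delta>))" using piR V d by metis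
    finally show "sS (\<iota> z (r \<delta>)) = rS (c \<delta>)" using units by blast
  qed
  have piPhi: "\<And>z \<delta>. z \<in> circle \<Longrightarrow> \<delta> \<in> V \<Longrightarrow> \<pi> (mS (\<iota> z (r \<delta>)) (c \<delta>)) = \<delta>"
  proof -
    fix z \<delta> assume z: "z \<in> circle" and d: "\<delta> \<in> V"
    have "\<pi> (mS (\<iota> z (r \<delta>)) (c \<delta>)) = m (r \<delta>) \<delta>"
      using piM[OF comp[OF z d]] iota[OF z] V d by (metis rangeI)
    then show "\<pi> (mS (\<iota> z (r \<delta>)) (c \<delta>)) = \<delta>" using GG by metis
  qed
  have "\<sigma> \<in> \<pi> -` V" "\<sigma>' \<in> \<pi> -` V" using V eq by auto
  then obtain z \<delta> z' \<delta>' where zd: "z \<in> circle" "\<delta> \<in> V" "\<sigma> = mS (\<iota> z (r \<delta>)) (c \<delta>)"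
     and zd': "z' \<in> circle" "\<delta>' \<in> V" "\<sigma>' = mS (\<iota> z' (r \<delta>')) (c \<delta>')"
    unfolding img[symmetric] by auto
  have dd: "\<delta>' = \<delta>" using piPhi zd zd' eq by metis
  define x where "x = r \<delta>"
  have x: "x \<in> range r" unfolding x_def by simp
  define w where "w = z' / z"
  have z0: "z \<noteq> 0" using zd by auto
  have w: "w \<in> circle" using zd zd' by (simp add: w_def norm_divide)
  have wz: "w * z = z'" using z0 by (simp add: w_def)
  have pis: "\<pi> \<sigma> = \<delta>" using piPhi zd by metis
  have "tact r mS \<pi> \<iota> w \<sigma> = mS (\<iota> w x) (mS (\<iota> z x) (c \<delta>))"
    unfolding tact_def pis x_def zd(3) by (simp add: zd(3)[symmetric] pis)
  also have "\<dots> = mS (mS (\<iota> w x) (\<iota> z x)) (c \<delta>)"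
  proof -
    have a1: "sS (\<iota> z x) = rS (c \<delta>)" using comp zd unfolding x_def by blast
    have "\<pi> (sS (\<iota> w x)) = \<pi> (sS (\<iota> z x))" using piS iota w zd x by metis
    then have "sS (\<iota> w x) = sS (\<iota> z x)" using unitsS by blast
    then have a2: "sS (\<iota> w x) = rS (\<iota> z x)" using iota zd x by metis
    show ?thesis using GSS a1 a2 by metis
  qed
  also have "\<dots> = \<sigma>'" using iotaM[OF w zd(1) x] wz zd' dd x_def by simp
  finally show ?thesis using w by metis
qed



lemma section_norm_const:
  assumes T: "twist r s m i rS sS mS iS \<pi> \<iota>" and G: "groupoid r s m i"
    and f: "is_section r mS \<pi> \<iota> f" and eq: "\<pi> \<sigma>' = \<pi> \<sigma>"
  shows "norm (f \<sigma>') = norm (f \<sigma>)"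
proof -
  obtain w where w: "w \<in> circle" "\<sigma>' = tact r mS \<pi> \<iota> w \<sigma>" using twist_fiber[OF T G eq] by blast
  have "f \<sigma>' = w * f \<sigma>" using f w unfolding is_section_def by simp
  then show ?thesis using w by (simp add: norm_mult)
qed

lemma sec_abs_eq:
  assumes T: "twist r s m i rS sS mS iS \<pi> \<iota>" and G: "groupoid r s m i"
    and f: "is_section r mS \<pi> \<iota> f"
  shows "sec_abs \<pi> f (\<pi> \<sigma>) = norm (f \<sigma>)"
  unfolding sec_abs_def
  by (rule section_norm_const[OF T G f], rule someI[where x=\<sigma>], rule refl)

lemma sec_abs_some:
  assumes T: "twist r s m i rS sS mS iS \<pi> \<iota>"
  shows "\<exists>\<sigma>. \<pi> \<sigma> = \<gamma> \<and> (\<forall>f. sec_abs \<pi> f \<gamma> = norm (f \<sigma>))"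
proof -
  have "surj \<pi>" using T unfolding twist_def by blast
  then have "\<exists>\<sigma>. \<pi> \<sigma> = \<gamma>" by (metis surjD)
  then show ?thesis unfolding sec_abs_def by (metis (mono_tags) someI_ex)
qed

lemma is_section_diff:
  "is_section r mS \<pi> \<iota> f \<Longrightarrow> is_section r mS \<pi> \<iota> g \<Longrightarrow> is_section r mS \<pi> \<iota> (\<lambda>\<sigma>. f \<sigma> - g \<sigma>)"
  unfolding is_section_def by (simp add: right_diff_distrib)

lemma pointwise_le_norm:
  assumes G: "groupoid r s m i" and L: "\<forall>\<gamma>. L \<gamma> \<ge> 0"
  shows "ennreal ((sec_abs \<pi> g \<gamma>)\<^sup>2) \<le> norm2pL_sq r s \<pi> L p g"
proof -
  let ?t = "\<lambda>\<gamma>. ennreal ((sec_abs \<pi> g \<gamma>)\<^sup>2 * (1 + L \<gamma>) ^ (2 * p))"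
  have x: "s \<gamma> \<in> range r" using G unfolding groupoid_def by (metis rangeI)
  have "ennreal ((sec_abs \<pi> g \<gamma>)\<^sup>2) \<le> ?t \<gamma>"
  proof (rule ennreal_leI)
    have "1 \<le> (1 + L \<gamma>) ^ (2 * p)" using L by (simp add: one_le_power)
    then show "(sec_abs \<pi> g \<gamma>)\<^sup>2 \<le> (sec_abs \<pi> g \<gamma>)\<^sup>2 * (1 + L \<gamma>) ^ (2 * p)"
      by (simp add: mult_le_cancel_left1)
  qed
  also have "\<dots> = (\<Sum>\<^sub>\<infinity>\<gamma>'\<in>{\<gamma>}. ?t \<gamma>')" by simp
  also have "\<dots> \<le> (\<Sum>\<^sub>\<infinity>\<gamma>'\<in>{\<gamma>'. s \<gamma>' = s \<gamma>}. ?t \<gamma>')"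
    by (rule infsum_mono_neutral) (auto simp: ens)
  also have "\<dots> \<le> (SUP x\<in>range r. \<Sum>\<^sub>\<infinity>\<gamma>'\<in>{\<gamma>'. s \<gamma>' = x}. ?t \<gamma>')"
    using x by (rule SUP_upper)
  also have "\<dots> \<le> norm2pL_sq r s \<pi> L p g" unfolding norm2pL_sq_def by simp
  finally show ?thesis .
qed

lemma finite_fiber_count_s:
  assumes E: "\<forall>\<gamma>. \<exists>V. open V \<and> \<gamma> \<in> V \<and> inj_on s V" and K: "compact K"
  shows "\<exists>N. \<forall>x. finite {\<gamma>\<in>K. s \<gamma> = x} \<and> card {\<gamma>\<in>K. s \<gamma> = x} \<le> N"
proof -
  obtain V where V: "\<And>\<gamma>. open (V \<gamma>) \<and> \<gamma> \<in> V \<gamma> \<and> inj_on s (V \<gamma>)" using E by metis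
  have "K \<subseteq> \<Union> (V ` K)" using V by blast
  then obtain T where T: "T \<subseteq> K" "finite T" "K \<subseteq> \<Union> (V ` T)"
    using compactE_image[OF K, of K V] V by metis
  show ?thesis
  proof (intro exI allI conjI)
    fix x
    let ?F = "{\<gamma>\<in>K. s \<gamma> = x}"
    obtain h where h: "\<And>\<gamma>. \<gamma> \<in> K \<Longrightarrow> h \<gamma> \<in> T \<and> \<gamma> \<in> V (h \<gamma>)" using T(3) by (metis UN_iff subsetD)
    have inj: "inj_on h ?F"
    proof (rule inj_onI)
      fix a b assume a: "a \<in> ?F" and b: "b \<in> ?F" and e: "h a = h b"
      have "a \<in> V (h a)" "b \<in> V (h a)" using h[of a] h[of b] a b e by auto
      moreover have "s a = s b" using a b by simp
      ultimately show "a = b" using V[of "h a"] by (meson inj_onD)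
    qed
    have sub: "h ` ?F \<subseteq> T" using h by auto
    show "finite ?F" using inj sub T(2) by (meson finite_imageD finite_subset)
    show "card ?F \<le> card T" using inj sub T(2) by (metis card_image card_mono)
  qed
qed

lemma finite_fiber_count_r:
  assumes G: "groupoid r s m i" and ci: "continuous_on UNIV i"
    and E: "\<forall>\<gamma>. \<exists>V. open V \<and> \<gamma> \<in> V \<and> inj_on s V" and K: "compact K"
  shows "\<exists>N. \<forall>x. finite {\<gamma>\<in>K. r \<gamma> = x} \<and> card {\<gamma>\<in>K. r \<gamma> = x} \<le> N"
proof -
  have K': "compact (i ` K)" using K ci by (meson compact_continuous_image continuous_on_subset subset_UNIV)
  obtain N where N: "\<And>x. finite {\<gamma>\<in>i ` K. s \<gamma> = x} \<and> card {\<gamma>\<in>i ` K. s \<gamma> = x} \<le> N"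
    using finite_fiber_count_s[OF E K'] by blast
  have ii: "\<And>a. i (i a) = a" using groupoid_ii[OF G] .
  have injI: "inj i" by (metis ii injI)
  have si: "\<And>a. s (i a) = r a" using G unfolding groupoid_def by blast
  show ?thesis
  proof (intro exI allI conjI)
    fix x
    have sub: "i ` {\<gamma>\<in>K. r \<gamma> = x} \<subseteq> {\<gamma>\<in>i ` K. s \<gamma> = x}" using si by auto
    have inj: "inj_on i {\<gamma>\<in>K. r \<gamma> = x}" using injI by (meson inj_on_subset subset_UNIV)
    show "finite {\<gamma>\<in>K. r \<gamma> = x}" using N[of x] sub inj by (meson finite_imageD finite_subset)
    show "card {\<gamma>\<in>K. r \<gamma> = x} \<le> N" using N[of x] sub inj
      by (metis (no_types, lifting) card_image card_mono dual_order.trans)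
  qed
qed



definition shrink :: "real \<Rightarrow> complex \<Rightarrow> complex" where
  "shrink e z = z * complex_of_real (max 0 (norm z - e) / norm z)"

lemma shrink_mult: "norm w = 1 \<Longrightarrow> shrink e (w * z) = w * shrink e z"
  unfolding shrink_def by (simp add: norm_mult)

lemma shrink_diff_norm: assumes e: "e > 0" shows "norm (shrink e z - z) = min (norm z) e"
proof (cases "z = 0")
  case True then show ?thesis using e by (simp add: shrink_def)
next
  case False
  define n where "n = norm z"
  have n: "n > 0" using False by (simp add: n_def)
  define a where "a = max 0 (n - e) / n"
  have "shrink e z - z = z * complex_of_real (a - 1)"
    unfolding shrink_def a_def n_def by (simp add: algebra_simps)
  then have "norm (shrink e z - z) = n * \<bar>a - 1\<bar>"
    by (simp only: norm_mult norm_of_real n_def real_norm_def)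
  also have "\<dots> = \<bar>n * (a - 1)\<bar>" using n by (simp add: abs_mult)
  also have "n * (a - 1) = max 0 (n - e) - n" using n by (simp add: a_def algebra_simps)
  also have "\<bar>max 0 (n - e) - n\<bar> = min n e" using e n by (simp add: max_def min_def)
  finally show ?thesis by (simp add: n_def)
qed

lemma shrink_nz: "e \<ge> 0 \<Longrightarrow> shrink e z \<noteq> 0 \<longleftrightarrow> norm z > e"
  unfolding shrink_def by (auto simp: max_def)

lemma shrink_cont: assumes e: "e > 0" shows "continuous_on UNIV (shrink e)"
proof (rule continuous_at_imp_continuous_on, intro ballI)
  fix z :: complex
  show "isCont (shrink e) z"
  proof (cases "z = 0")
    case False
    then show ?thesis unfolding shrink_def by (intro continuous_intros; simp)
  next
    case True
    have "norm (shrink e x) \<le> norm x" for x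
      unfolding shrink_def
    proof (cases "x = 0")
      case False
      have "max 0 (norm x - e) / norm x \<le> 1" using False e by (simp add: divide_le_eq_1)
      moreover have "0 \<le> max 0 (norm x - e) / norm x" by simp
      ultimately have "norm x * \<bar>max 0 (norm x - e) / norm x\<bar> \<le> norm x"
        using e by (simp add: mult_left_le)
      then show "norm (x * complex_of_real (max 0 (norm x - e) / norm x)) \<le> norm x"
        by (simp only: norm_mult norm_of_real)
    qed simp
    then have ev: "eventually (\<lambda>x. norm (shrink e x) \<le> norm x) (at 0)"
      by (simp add: always_eventually)
    have "((\<lambda>x::complex. norm x) \<longlongrightarrow> 0) (at 0)"
      using tendsto_norm_zero[OF tendsto_ident_at[of 0 UNIV]] by simp
    then have "(shrink e \<longlongrightarrow> 0) (at 0)"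
      using Lim_null_comparison[OF ev] by blast
    moreover have "shrink e 0 = 0" by (simp add: shrink_def)
    ultimately show ?thesis using True by (simp add: isCont_def)
  qed
qed



lemma fiber_est:
  fixes f g :: "'s::topological_space \<Rightarrow> complex" and \<pi> :: "'s \<Rightarrow> 'g::t2_space"
  assumes T: "twist r s m i rS sS mS iS \<pi> \<iota>"
    and Lnn: "\<forall>\<gamma>. L \<gamma> \<ge> 0" and e: "e > 0"
    and gK: "\<And>\<sigma>. g \<sigma> \<noteq> 0 \<Longrightarrow> \<pi> \<sigma> \<in> K"
    and M: "\<And>\<gamma>. \<gamma> \<in> K \<Longrightarrow> L \<gamma> \<le> M"
    and fin: "finite (A \<inter> K)" and card: "card (A \<inter> K) \<le> N"
  shows "(\<Sum>\<^sub>\<infinity>\<gamma>\<in>A. ennreal ((sec_abs \<pi> (\<lambda>\<sigma>. shrink e (f \<sigma>) - f \<sigma>) \<gamma>)\<^sup>2 * (1 + L \<gamma>) ^ (2 * p)))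
     \<le> 2 * (\<Sum>\<^sub>\<infinity>\<gamma>\<in>A. ennreal ((sec_abs \<pi> (\<lambda>\<sigma>. g \<sigma> - f \<sigma>) \<gamma>)\<^sup>2 * (1 + L \<gamma>) ^ (2 * p)))
       + ennreal (2 * e\<^sup>2 * (1 + M) ^ (2 * p) * N)"
proof -
  define c where "c = 2 * e\<^sup>2 * (1 + M) ^ (2 * p)"
  let ?w = "\<lambda>\<gamma>. (1 + L \<gamma>) ^ (2 * p)"
  have "(1 + M) ^ (2 * p) \<ge> 0" by (simp add: power_mult)
  then have c0: "c \<ge> 0" unfolding c_def by simp
  let ?tg = "\<lambda>\<gamma>. ennreal ((sec_abs \<pi> (\<lambda>\<sigma>. g \<sigma> - f \<sigma>) \<gamma>)\<^sup>2 * ?w \<gamma>)"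
  let ?th = "\<lambda>\<gamma>. ennreal ((sec_abs \<pi> (\<lambda>\<sigma>. shrink e (f \<sigma>) - f \<sigma>) \<gamma>)\<^sup>2 * ?w \<gamma>)"
  let ?cK = "\<lambda>\<gamma>. if \<gamma> \<in> K then ennreal c else 0"
  have pw: "?th \<gamma> \<le> 2 * ?tg \<gamma> + ?cK \<gamma>" for \<gamma>
  proof -
    obtain \<sigma> where \<sigma>: "\<pi> \<sigma> = \<gamma>" "\<And>h. sec_abs \<pi> h \<gamma> = norm (h \<sigma>)"
      using sec_abs_some[OF T] by blast
    have w0: "?w \<gamma> \<ge> 0" using Lnn by simp
    define a where "a = norm (g \<sigma> - f \<sigma>)"
    define b where "b = min (norm (g \<sigma>)) e"
    have hs: "sec_abs \<pi> (\<lambda>\<sigma>. shrink e (f \<sigma>) - f \<sigma>) \<gamma> = min (norm (f \<sigma>)) e"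
      using \<sigma>(2) shrink_diff_norm[OF e] by simp
    have gs: "sec_abs \<pi> (\<lambda>\<sigma>. g \<sigma> - f \<sigma>) \<gamma> = a" using \<sigma>(2) a_def by simp
    have "min (norm (f \<sigma>)) e \<le> a + b"
    proof -
      have "\<bar>norm (g \<sigma>) - norm (f \<sigma>)\<bar> \<le> a" unfolding a_def by (rule norm_triangle_ineq3)
      then show ?thesis unfolding b_def by (auto simp: min_def)
    qed
    moreover have "0 \<le> min (norm (f \<sigma>)) e" using e by simp
    ultimately have "(min (norm (f \<sigma>)) e)\<^sup>2 \<le> (a + b)\<^sup>2" by (simp add: power_mono)
    also have "\<dots> \<le> 2 * a\<^sup>2 + 2 * b\<^sup>2"
      using zero_le_power2[of "a - b"] unfolding power2_eq_square by (simp add: algebra_simps)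
    finally have "(min (norm (f \<sigma>)) e)\<^sup>2 * ?w \<gamma> \<le> (2 * a\<^sup>2 + 2 * b\<^sup>2) * ?w \<gamma>"
      using w0 by (rule mult_right_mono)
    then have ineq: "(min (norm (f \<sigma>)) e)\<^sup>2 * ?w \<gamma> \<le> 2 * (a\<^sup>2 * ?w \<gamma>) + 2 * b\<^sup>2 * ?w \<gamma>"
      by (simp add: algebra_simps)
    have bK: "2 * b\<^sup>2 * ?w \<gamma> \<le> (if \<gamma> \<in> K then c else 0)"
    proof (cases "\<gamma> \<in> K")
      case True
      have "b\<^sup>2 \<le> e\<^sup>2" unfolding b_def using e by (simp add: power_mono)
      moreover have "?w \<gamma> \<le> (1 + M) ^ (2 * p)" using M[OF True] Lnn by (simp add: power_mono)
      ultimately have "b\<^sup>2 * ?w \<gamma> \<le> e\<^sup>2 * (1 + M) ^ (2 * p)"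
        using w0 by (meson mult_mono zero_le_power2)
      then show ?thesis using True by (simp add: c_def)
    next
      case False
      then have "g \<sigma> = 0" using gK \<sigma>(1) by blast
      then show ?thesis using False using e by (simp add: b_def)
    qed
    have "?th \<gamma> \<le> ennreal (2 * (a\<^sup>2 * ?w \<gamma>) + (if \<gamma> \<in> K then c else 0))"
      unfolding hs using ineq bK by (intro ennreal_leI) linarith
    also have "\<dots> = ennreal (2 * (a\<^sup>2 * ?w \<gamma>)) + ennreal (if \<gamma> \<in> K then c else 0)"
      using w0 c0 by (intro ennreal_plus) auto
    also have "ennreal (2 * (a\<^sup>2 * ?w \<gamma>)) = 2 * ennreal (a\<^sup>2 * ?w \<gamma>)"
      using w0 by (simp add: ennreal_mult)
    also have "ennreal (if \<gamma> \<in> K then c else 0) = ?cK \<gamma>" by simp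
    finally show ?thesis by (simp add: gs)
  qed
  have "(\<Sum>\<^sub>\<infinity>\<gamma>\<in>A. ?th \<gamma>) \<le> (\<Sum>\<^sub>\<infinity>\<gamma>\<in>A. 2 * ?tg \<gamma> + ?cK \<gamma>)"
    by (rule infsum_mono) (auto simp: ens pw)
  also have "\<dots> = 2 * (\<Sum>\<^sub>\<infinity>\<gamma>\<in>A. ?tg \<gamma>) + (\<Sum>\<^sub>\<infinity>\<gamma>\<in>A. ?cK \<gamma>)"
  proof -
    have cm: "(\<Sum>\<^sub>\<infinity>\<gamma>\<in>A. 2 * ?tg \<gamma>) = 2 * (\<Sum>\<^sub>\<infinity>\<gamma>\<in>A. ?tg \<gamma>)"
      by (simp only: mult_2 infsum_add[OF ens ens])
    show ?thesis by (subst infsum_add[OF ens ens]) (simp only: cm)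
  qed
  also have "(\<Sum>\<^sub>\<infinity>\<gamma>\<in>A. ?cK \<gamma>) = (\<Sum>\<^sub>\<infinity>\<gamma>\<in>A \<inter> K. ennreal c)"
    by (rule infsum_cong_neutral) auto
  also have "\<dots> = of_nat (card (A \<inter> K)) * ennreal c" using fin by simp
  also have "\<dots> \<le> ennreal (c * N)"
  proof -
    have "of_nat (card (A \<inter> K)) * ennreal c = ennreal (real (card (A \<inter> K)) * c)"
      using c0 by (simp add: ennreal_of_nat_eq_real_of_nat ennreal_mult)
    also have "\<dots> \<le> ennreal (c * N)"
      using c0 card by (intro ennreal_leI) (simp add: mult.commute mult_left_mono)
    finally show ?thesis .
  qed
  finally show ?thesis unfolding c_def by (simp add: add_left_mono)
qed



lemma norm_est:
  fixes f g :: "'s::topological_space \<Rightarrow> complex" and \<pi> :: "'s \<Rightarrow> 'g::t2_space"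
  assumes T: "twist r s m i rS sS mS iS \<pi> \<iota>"
    and Lnn: "\<forall>\<gamma>. L \<gamma> \<ge> 0" and e: "e > 0"
    and gK: "\<And>\<sigma>. g \<sigma> \<noteq> 0 \<Longrightarrow> \<pi> \<sigma> \<in> K"
    and M: "\<And>\<gamma>. \<gamma> \<in> K \<Longrightarrow> L \<gamma> \<le> M"
    and Ns: "\<And>x. finite {\<gamma>\<in>K. s \<gamma> = x} \<and> card {\<gamma>\<in>K. s \<gamma> = x} \<le> N"
    and Nr: "\<And>x. finite {\<gamma>\<in>K. r \<gamma> = x} \<and> card {\<gamma>\<in>K. r \<gamma> = x} \<le> N"
  shows "norm2pL_sq r s \<pi> L p (\<lambda>\<sigma>. shrink e (f \<sigma>) - f \<sigma>)
     \<le> 2 * norm2pL_sq r s \<pi> L p (\<lambda>\<sigma>. g \<sigma> - f \<sigma>) + ennreal (2 * e\<^sup>2 * (1 + M) ^ (2 * p) * N)"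
proof -
  let ?C = "ennreal (2 * e\<^sup>2 * (1 + M) ^ (2 * p) * N)"
  let ?th = "\<lambda>\<gamma>. ennreal ((sec_abs \<pi> (\<lambda>\<sigma>. shrink e (f \<sigma>) - f \<sigma>) \<gamma>)\<^sup>2 * (1 + L \<gamma>) ^ (2 * p))"
  let ?tg = "\<lambda>\<gamma>. ennreal ((sec_abs \<pi> (\<lambda>\<sigma>. g \<sigma> - f \<sigma>) \<gamma>)\<^sup>2 * (1 + L \<gamma>) ^ (2 * p))"
  let ?Sg = "SUP x\<in>range r. \<Sum>\<^sub>\<infinity>\<gamma>\<in>{\<gamma>. s \<gamma> = x}. ?tg \<gamma>"
  let ?Rg = "SUP x\<in>range r. \<Sum>\<^sub>\<infinity>\<gamma>\<in>{\<gamma>. r \<gamma> = x}. ?tg \<gamma>"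
  have ng: "norm2pL_sq r s \<pi> L p (\<lambda>\<sigma>. g \<sigma> - f \<sigma>) = max ?Sg ?Rg" unfolding norm2pL_sq_def ..
  have s1: "(SUP x\<in>range r. \<Sum>\<^sub>\<infinity>\<gamma>\<in>{\<gamma>. s \<gamma> = x}. ?th \<gamma>) \<le> 2 * max ?Sg ?Rg + ?C"
  proof (rule SUP_least)
    fix x assume x: "x \<in> range r"
    have eq: "{\<gamma>. s \<gamma> = x} \<inter> K = {\<gamma>\<in>K. s \<gamma> = x}" by auto
    have "(\<Sum>\<^sub>\<infinity>\<gamma>\<in>{\<gamma>. s \<gamma> = x}. ?th \<gamma>) \<le> 2 * (\<Sum>\<^sub>\<infinity>\<gamma>\<in>{\<gamma>. s \<gamma> = x}. ?tg \<gamma>) + ?C"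
      by (rule fiber_est[OF T Lnn e gK M]) (use Ns[of x] eq in auto)
    also have "\<dots> \<le> 2 * ?Sg + ?C"
      using x by (intro add_right_mono mult_left_mono SUP_upper) auto
    also have "\<dots> \<le> 2 * max ?Sg ?Rg + ?C"
      by (intro add_right_mono mult_left_mono) auto
    finally show "(\<Sum>\<^sub>\<infinity>\<gamma>\<in>{\<gamma>. s \<gamma> = x}. ?th \<gamma>) \<le> 2 * max ?Sg ?Rg + ?C" .
  qed
  have s2: "(SUP x\<in>range r. \<Sum>\<^sub>\<infinity>\<gamma>\<in>{\<gamma>. r \<gamma> = x}. ?th \<gamma>) \<le> 2 * max ?Sg ?Rg + ?C"
  proof (rule SUP_least)
    fix x assume x: "x \<in> range r"
    have eq: "{\<gamma>. r \<gamma> = x} \<inter> K = {\<gamma>\<in>K. r \<gamma> = x}" by auto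
    have "(\<Sum>\<^sub>\<infinity>\<gamma>\<in>{\<gamma>. r \<gamma> = x}. ?th \<gamma>) \<le> 2 * (\<Sum>\<^sub>\<infinity>\<gamma>\<in>{\<gamma>. r \<gamma> = x}. ?tg \<gamma>) + ?C"
      by (rule fiber_est[OF T Lnn e gK M]) (use Nr[of x] eq in auto)
    also have "\<dots> \<le> 2 * ?Rg + ?C"
      using x by (intro add_right_mono mult_left_mono SUP_upper) auto
    also have "\<dots> \<le> 2 * max ?Sg ?Rg + ?C"
      by (intro add_right_mono mult_left_mono) auto
    finally show "(\<Sum>\<^sub>\<infinity>\<gamma>\<in>{\<gamma>. r \<gamma> = x}. ?th \<gamma>) \<le> 2 * max ?Sg ?Rg + ?C" .
  qed
  show ?thesis unfolding ng using s1 s2 unfolding norm2pL_sq_def by simp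
qed



lemma part1:
  fixes r s :: "'g::t2_space \<Rightarrow> 'g" and m :: "'g \<Rightarrow> 'g \<Rightarrow> 'g" and i :: "'g \<Rightarrow> 'g"
    and rS sS :: "'s::topological_space \<Rightarrow> 's" and mS :: "'s \<Rightarrow> 's \<Rightarrow> 's" and iS :: "'s \<Rightarrow> 's"
    and \<pi> :: "'s \<Rightarrow> 'g" and \<iota> :: "complex \<Rightarrow> 'g \<Rightarrow> 's"
    and L :: "'g \<Rightarrow> real"
  assumes E: "lch_etale_groupoid r s m i"
    and T: "twist r s m i rS sS mS iS \<pi> \<iota>"
    and Lf: "length_function r s m i L"
    and Lc: "continuous_on UNIV L"
    and f: "f \<in> H2Lp r s mS \<pi> \<iota> L p"
  shows "f \<in> sec_closure r s mS \<pi> \<iota> L p (Cc_sec r mS \<pi> \<iota> (sec_supp \<pi> f))"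
proof -
  have G: "groupoid r s m i" and ci: "continuous_on UNIV i"
    using E unfolding lch_etale_groupoid_def topological_groupoid_def by blast+
  have Einj: "\<forall>\<gamma>. \<exists>V. open V \<and> \<gamma> \<in> V \<and> inj_on s V"
  proof
    fix \<gamma>
    obtain V g where V: "open V" "\<gamma> \<in> V" "homeomorphism V (s ` V) s g"
      using E unfolding lch_etale_groupoid_def by blast
    have "inj_on s V" using V(3) unfolding homeomorphism_def by (metis inj_on_inverseI)
    then show "\<exists>V. open V \<and> \<gamma> \<in> V \<and> inj_on s V" using V by blast
  qed
  have Lnn: "\<forall>\<gamma>. L \<gamma> \<ge> 0" using Lf unfolding length_function_def by blast
  define U where "U = sec_supp \<pi> f"
  obtain F where fsec: "is_section r mS \<pi> \<iota> f" and Fc: "\<And>n. F n \<in> Cc_sec r mS \<pi> \<iota> UNIV"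
    and Fl: "(\<lambda>n. norm2pL_sq r s \<pi> L p (\<lambda>\<sigma>. F n \<sigma> - f \<sigma>)) \<longlonglongrightarrow> 0"
    using f unfolding H2Lp_def sec_closure_def by blast
  have Fsec: "\<And>n. is_section r mS \<pi> \<iota> (F n)" and Fcont: "\<And>n. continuous_on UNIV (F n)"
    and Fcpt: "\<And>n. compact (closure (sec_supp \<pi> (F n)))"
    using Fc unfolding Cc_sec_def by blast+
  have ptw: "norm (F n \<sigma> - f \<sigma>) < e"
    if "norm2pL_sq r s \<pi> L p (\<lambda>\<sigma>. F n \<sigma> - f \<sigma>) < ennreal (e\<^sup>2)" "e > 0" for n \<sigma> e
  proof -
    have "ennreal ((norm (F n \<sigma> - f \<sigma>))\<^sup>2) = ennreal ((sec_abs \<pi> (\<lambda>\<sigma>. F n \<sigma> - f \<sigma>) (\<pi> \<sigma>))\<^sup>2)"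
      using sec_abs_eq[OF T G is_section_diff[OF Fsec fsec]] by simp
    also have "\<dots> \<le> norm2pL_sq r s \<pi> L p (\<lambda>\<sigma>. F n \<sigma> - f \<sigma>)" by (rule pointwise_le_norm[OF G Lnn])
    also have "\<dots> < ennreal (e\<^sup>2)" by fact
    finally have "(norm (F n \<sigma> - f \<sigma>))\<^sup>2 < e\<^sup>2" by (simp add: ennreal_less_iff)
    then show ?thesis using that(2) by (meson power2_less_imp_less less_imp_le)
  qed
  have unif: "eventually (\<lambda>n. \<forall>\<sigma>. norm (F n \<sigma> - f \<sigma>) < e) sequentially" if e: "e > 0" for e
  proof -
    have "eventually (\<lambda>n. norm2pL_sq r s \<pi> L p (\<lambda>\<sigma>. F n \<sigma> - f \<sigma>) < ennreal (e\<^sup>2)) sequentially"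
      using e by (intro order_tendstoD(2)[OF Fl]) simp
    then show ?thesis by eventually_elim (use ptw e in blast)
  qed
  have fcont: "continuous_on UNIV f"
  proof (rule uniform_limit_theorem[where f=F and F=sequentially])
    show "\<forall>\<^sub>F n in sequentially. continuous_on UNIV (F n)" using Fcont by simp
    show "uniform_limit UNIV F f sequentially"
    proof (rule uniform_limitI)
      fix e :: real assume "e > 0"
      from unif[OF this] show "\<forall>\<^sub>F n in sequentially. \<forall>x\<in>UNIV. dist (F n x) (f x) < e"
        by eventually_elim (simp add: dist_norm)
    qed
  qed simp
  have Cc: "(\<lambda>\<sigma>. shrink e (f \<sigma>)) \<in> Cc_sec r mS \<pi> \<iota> U" if e: "e > 0" for e
  proof -
    have sec: "is_section r mS \<pi> \<iota> (\<lambda>\<sigma>. shrink e (f \<sigma>))"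
      using fsec unfolding is_section_def by (simp add: shrink_mult)
    have cont: "continuous_on UNIV (\<lambda>\<sigma>. shrink e (f \<sigma>))"
      by (rule continuous_on_compose2[OF shrink_cont[OF e] fcont]) auto
    obtain n where n: "\<forall>\<sigma>. norm (F n \<sigma> - f \<sigma>) < e"
      using eventually_happens[OF unif[OF e]] by auto
    have sub: "sec_supp \<pi> (\<lambda>\<sigma>. shrink e (f \<sigma>)) \<subseteq> sec_supp \<pi> (F n)"
      unfolding sec_supp_def
    proof (rule image_mono, safe)
      fix \<sigma> assume h: "shrink e (f \<sigma>) \<noteq> 0" "F n \<sigma> = 0"
      then have "norm (f \<sigma>) > e" using shrink_nz e by auto
      moreover have "norm (F n \<sigma> - f \<sigma>) < e" using n by blast
      ultimately show False using h(2) by simp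
    qed
    have cpt: "compact (closure (sec_supp \<pi> (\<lambda>\<sigma>. shrink e (f \<sigma>))))"
    proof -
      have "closure (sec_supp \<pi> (\<lambda>\<sigma>. shrink e (f \<sigma>))) =
            closure (sec_supp \<pi> (F n)) \<inter> closure (sec_supp \<pi> (\<lambda>\<sigma>. shrink e (f \<sigma>)))"
        using closure_mono[OF sub] by blast
      then show ?thesis using compact_Int_closed[OF Fcpt[of n] closed_closure] by metis
    qed
    have sup: "sec_supp \<pi> (\<lambda>\<sigma>. shrink e (f \<sigma>)) \<subseteq> U"
      unfolding U_def sec_supp_def by (rule image_mono) (auto simp: shrink_def)
    show ?thesis unfolding Cc_sec_def using sec cont cpt sup by blast
  qed
  define ek where "ek k = inverse (real (Suc k))" for k
  have ek0: "ek k > 0" for k by (simp add: ek_def)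
  have ek1: "ek k \<le> 1" for k unfolding ek_def by (simp add: inverse_le_1_iff)
  have conv: "(\<lambda>k. norm2pL_sq r s \<pi> L p (\<lambda>\<sigma>. shrink (ek k) (f \<sigma>) - f \<sigma>)) \<longlonglongrightarrow> 0"
  proof (rule order_tendstoI)
    fix a :: ennreal assume "a < 0" then show "eventually (\<lambda>k. a < norm2pL_sq r s \<pi> L p (\<lambda>\<sigma>. shrink (ek k) (f \<sigma>) - f \<sigma>)) sequentially"
      by simp
  next
    fix a :: ennreal assume a: "0 < a"
    obtain b where b: "0 < b" "b < a" using dense[OF a] by blast
    define d where "d = enn2real b"
    have bt: "b < top" using less_le_trans[OF b(2) top_greatest] .
    have d0: "d > 0" using b bt by (simp add: d_def enn2real_positive_iff)
    have bd: "b = ennreal d" using bt by (simp add: d_def)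
    define \<delta> where "\<delta> = d / 3"
    have \<delta>0: "\<delta> > 0" using d0 by (simp add: \<delta>_def)
    have "eventually (\<lambda>n. norm2pL_sq r s \<pi> L p (\<lambda>\<sigma>. F n \<sigma> - f \<sigma>) < ennreal \<delta>) sequentially"
      by (rule order_tendstoD(2)[OF Fl]) (simp add: \<delta>0)
    then obtain n0 where n0: "\<forall>n\<ge>n0. norm2pL_sq r s \<pi> L p (\<lambda>\<sigma>. F n \<sigma> - f \<sigma>) < ennreal \<delta>"
      unfolding eventually_sequentially by blast
    define n where "n = n0"
    have n: "norm2pL_sq r s \<pi> L p (\<lambda>\<sigma>. F n \<sigma> - f \<sigma>) < ennreal \<delta>" using n0 by (simp add: n_def)
    define K where "K = closure (sec_supp \<pi> (F n))"
    have Kc: "compact K" unfolding K_def by (rule Fcpt)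
    obtain Ns where Ns: "\<And>x. finite {\<gamma>\<in>K. s \<gamma> = x} \<and> card {\<gamma>\<in>K. s \<gamma> = x} \<le> Ns"
      using finite_fiber_count_s[OF Einj Kc] by blast
    obtain Nr where Nr: "\<And>x. finite {\<gamma>\<in>K. r \<gamma> = x} \<and> card {\<gamma>\<in>K. r \<gamma> = x} \<le> Nr"
      using finite_fiber_count_r[OF G ci Einj Kc] by blast
    define N where "N = max Ns Nr"
    have Ns': "\<And>x. finite {\<gamma>\<in>K. s \<gamma> = x} \<and> card {\<gamma>\<in>K. s \<gamma> = x} \<le> N"
      using Ns unfolding N_def by (meson le_trans max.cobounded1)
    have Nr': "\<And>x. finite {\<gamma>\<in>K. r \<gamma> = x} \<and> card {\<gamma>\<in>K. r \<gamma> = x} \<le> N"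
      using Nr unfolding N_def by (meson le_trans max.cobounded2)
    have "compact (L ` K)" using Kc Lc by (meson compact_continuous_image continuous_on_subset subset_UNIV)
    then obtain M where M0: "\<forall>y\<in>L ` K. norm y \<le> M" using compact_imp_bounded bounded_iff by metis
    have M: "\<And>\<gamma>. \<gamma> \<in> K \<Longrightarrow> L \<gamma> \<le> M" using M0 by fastforce
    have gK: "\<And>\<sigma>. F n \<sigma> \<noteq> 0 \<Longrightarrow> \<pi> \<sigma> \<in> K"
      unfolding K_def sec_supp_def using closure_subset by fastforce
    define Q where "Q = (1 + M) ^ (2 * p) * real N"
    have Q0: "Q \<ge> 0" unfolding Q_def by (simp add: power_mult)
    define e0 where "e0 = min 1 (\<delta> / (2 * Q + 1))"
    have e00: "e0 > 0" using \<delta>0 Q0 by (simp add: e0_def)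
    have ev: "eventually (\<lambda>k. ek k < e0) sequentially"
      unfolding ek_def by (rule order_tendstoD(2)[OF LIMSEQ_inverse_real_of_nat e00])
    show "eventually (\<lambda>k. norm2pL_sq r s \<pi> L p (\<lambda>\<sigma>. shrink (ek k) (f \<sigma>) - f \<sigma>) < a) sequentially"
      using ev
    proof eventually_elim
      case (elim k)
      let ?e = "ek k"
      have small: "2 * ?e\<^sup>2 * (1 + M) ^ (2 * p) * real N \<le> \<delta>"
      proof -
        have "?e\<^sup>2 \<le> ?e" using ek0[of k] ek1[of k] by (simp add: power2_eq_square mult_left_le)
        also have "\<dots> \<le> \<delta> / (2 * Q + 1)" using elim by (simp add: e0_def)
        finally have "?e\<^sup>2 * (2 * Q + 1) \<le> \<delta>" using Q0 by (simp add: pos_le_divide_eq)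
        moreover have "2 * ?e\<^sup>2 * Q \<le> ?e\<^sup>2 * (2 * Q + 1)"
          by (simp add: algebra_simps)
        ultimately have "2 * ?e\<^sup>2 * Q \<le> \<delta>" by linarith
        then show ?thesis by (simp add: Q_def mult.assoc)
      qed
      have "norm2pL_sq r s \<pi> L p (\<lambda>\<sigma>. shrink ?e (f \<sigma>) - f \<sigma>)
          \<le> 2 * norm2pL_sq r s \<pi> L p (\<lambda>\<sigma>. F n \<sigma> - f \<sigma>) + ennreal (2 * ?e\<^sup>2 * (1 + M) ^ (2 * p) * N)"
        by (rule norm_est[OF T Lnn ek0 gK M Ns' Nr'])
      also have "\<dots> \<le> 2 * ennreal \<delta> + ennreal \<delta>"
      proof (rule add_mono)
        show "2 * norm2pL_sq r s \<pi> L p (\<lambda>\<sigma>. F n \<sigma> - f \<sigma>) \<le> 2 * ennreal \<delta>"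
          using n by (intro mult_left_mono) auto
        show "ennreal (2 * ?e\<^sup>2 * (1 + M) ^ (2 * p) * N) \<le> ennreal \<delta>"
          using small by (rule ennreal_leI)
      qed
      also have "\<dots> = ennreal d"
      proof -
        have "ennreal d = ennreal (2 * \<delta>) + ennreal \<delta>"
          using \<delta>0 by (subst ennreal_plus[symmetric]) (auto simp: \<delta>_def)
        also have "ennreal (2 * \<delta>) = 2 * ennreal \<delta>" using \<delta>0 by (simp add: ennreal_mult)
        finally show ?thesis by simp
      qed
      also have "\<dots> < a" using b bd by simp
      finally show ?case .
    qed
  qed
  show ?thesis unfolding sec_closure_def U_def[symmetric]
    using fsec Cc[OF ek0] conv by (intro CollectI conjI exI[where x="\<lambda>k \<sigma>. shrink (ek k) (f \<sigma>)"]) auto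
qed


theorem proposition3p8:
  fixes r s :: "'g::t2_space \<Rightarrow> 'g" and m :: "'g \<Rightarrow> 'g \<Rightarrow> 'g" and i :: "'g \<Rightarrow> 'g"
    and rS sS :: "'s::topological_space \<Rightarrow> 's" and mS :: "'s \<Rightarrow> 's \<Rightarrow> 's" and iS :: "'s \<Rightarrow> 's"
    and \<pi> :: "'s \<Rightarrow> 'g" and \<iota> :: "complex \<Rightarrow> 'g \<Rightarrow> 's"
    and L :: "'g \<Rightarrow> real"
  assumes "lch_etale_groupoid r s m i"
    and "twist r s m i rS sS mS iS \<pi> \<iota>"
    and "length_function r s m i L"
    and "continuous_on UNIV L"
  shows "(\<forall>(p::nat) f. f \<in> H2Lp r s mS \<pi> \<iota> L p \<and> open (sec_supp \<pi> f) \<longrightarrow>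
            f \<in> sec_closure r s mS \<pi> \<iota> L p (Cc_sec r mS \<pi> \<iota> (sec_supp \<pi> f)))
       \<and> (\<forall>f. f \<in> H2L r s mS \<pi> \<iota> L UNIV \<and> open (sec_supp \<pi> f) \<longrightarrow>
            f \<in> H2L r s mS \<pi> \<iota> L (sec_supp \<pi> f))"
proof (intro conjI allI impI)
  fix p f assume "f \<in> H2Lp r s mS \<pi> \<iota> L p \<and> open (sec_supp \<pi> f)"
  then show "f \<in> sec_closure r s mS \<pi> \<iota> L p (Cc_sec r mS \<pi> \<iota> (sec_supp \<pi> f))"
    using part1[OF assms] by blast
next
  fix f assume h: "f \<in> H2L r s mS \<pi> \<iota> L UNIV \<and> open (sec_supp \<pi> f)"
  have "f \<in> sec_closure r s mS \<pi> \<iota> L p (Cc_sec r mS \<pi> \<iota> (sec_supp \<pi> f))" for p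
  proof -
    have "f \<in> H2Lp r s mS \<pi> \<iota> L p" using h unfolding H2L_def H2Lp_def by blast
    then show ?thesis using part1[OF assms] by blast
  qed
  moreover have "f \<in> C0_sec r mS \<pi> \<iota> (sec_supp \<pi> f)" using h unfolding H2L_def C0_sec_def by blast
  ultimately show "f \<in> H2L r s mS \<pi> \<iota> L (sec_supp \<pi> f)" unfolding H2L_def by blast
qed

end
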